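(* Assume (RHS.1), (RHS.2), (BC.1), (BC.2), and, if (RHS.2b) holds, that condition (M.1) holds. If $u_{\mathfrak h}\in\mathbb V_h$ solves the discrete problem, then $$\|u_{\mathfrak h}\|_{L^\infty(\Omega_h)}\le C\|f\|_{L^\infty(\Omega_h)}+\max_{z\in\mathcal N_h^b}|\tilde g_\varepsilon(z)|,$$ where $C$ depends only on $\Omega$ and is independent of $\mathfrak h=(h,\varepsilon,\theta)$.
   Context: Setting: $\Omega\subset\mathbb R^d$ ($d\ge1$) is a bounded domain with continuous boundary. For $r>0$, $\Omega^{(r)}=\{x\in\Omega:\operatorname{dist}(x,\partial\Omega)>r\}$. $\{\mathcal T_h\}_{h>0}$ is a family of meshes of closed simplices, $h=\max_T\operatorname{diam}T$, $\Omega_h$ the interior of the union of the simplices, with $\Omega^{(h)}\subset\Omega_h\subset\Omega$; $\mathcal N_h$ the set of vertices. $\mathbb V_h$: continuous piecewise linear functions on $\mathcal T_h$, hat basis $\{\hat\varphi_z\}$, Lagrange interpolant $\mathcal I_h$. Parameters $\mathfrak h=(h,\varepsilon,\theta)$, $\varepsilon\in[h,\operatorname{diam}\Omega]$, $0<\theta\le1$. $\mathcal N_h^I=\mathcal N_h\cap\Omega^{(2\varepsilon)}$, $\mathcal N_h^b=\mathcal N_h\setminus\mathcal N_h^I$. $\mathbb S_\theta$: finite symmetric subset of the unit sphere $\mathbb S$ such that each $v\in\mathbb S$ has $v_\theta\in\mathbb S_\theta$ with $|v-v_\theta|\le\theta$. For $z\in\mathcal N_h^I$: $\mathcal N_{\mathfrak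 h}(z)=\{z\}\cup\{z+\varepsilon v_\theta:v_\theta\in\mathbb S_\theta\}$, $-\Delta^\diamond_{\infty,\mathfrak h}w(z)=\varepsilon^{-2}\big(2w(z)-\max_{x\in\mathcal N_{\mathfrak h}(z)}\mathcal I_hw(x)-\min_{x\in\mathcal N_{\mathfrak h}(z)}\mathcal I_hw(x)\big)$, $\widetilde{\mathcal N}_{\mathfrak h}(z)=\{z\}\cup\{z'\in\mathcal N_h:\exists v_\theta\in\mathbb S_\theta,\ \hat\varphi_{z'}(z+\varepsilon v_\theta)>0\}$. Assumptions: (RHS.1) $f\in C(\Omega)\cap L^\infty(\Omega)$. (RHS.2) either (RHS.2a) $\sup_\Omega f<0$ or $\inf_\Omega f>0$, or (RHS.2b) $f\equiv0$. (BC.1) $g\in C(\partial\Omega)$. (BC.2) for every $\varepsilon>0$ a function $\tilde g_\varepsilon\in C(\overline\Omega)$ is given such that, if $g\in C^{0,\alpha}(\partial\Omega)$ for some $\alpha\in[0,1]$, then $\tilde g_\varepsilon\in C^{0,\alpha}(\overline\Omega)$ and $\|g-\tilde g_\varepsilon\|_{L^\infty(\partial\Omega)}\le C\varepsilon^\alpha$. (M.1) for every nonempty $S\subset\mathcal N_h^I$ there are $z\in S$, $z'\in\mathcal N_h\setminus S$ with $z'\in\widetilde{\mathcal N}_{\mathfrak h}(z)$. Discrete problem: find $u_{\mathfrak h}\in\mathbb V_h$ with $-\Delta^\diamond_{\infty,\mathfrak h}u_{\mathfrak h}(z)=f(z)$ for $z\in\mathcal N_h^I$ and $u_{\mathfrak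 h}(z)=\tilde g_\varepsilon(z)$ for $z\in\mathcal N_h^b$. *)

theory Defs
  imports "HOL-Analysis.Analysis"
begin

definition inner_set :: "'a::euclidean_space set \<Rightarrow> real \<Rightarrow> 'a set" where
  "inner_set Om r = {x \<in> Om. infdist x (frontier Om) > r}"

text \<open>Continuous boundary: locally, in a suitably rotated coordinate system
  (unit normal direction n, hyperplane orthogonal to n), Omega is the strict
  subgraph of a continuous function.\<close>
definition continuous_boundary :: "'a::euclidean_space set \<Rightarrow> bool" where
  "continuous_boundary Om \<longleftrightarrow>
     (\<forall>x\<in>frontier Om. \<exists>n r (phi :: 'a \<Rightarrow> real).
        norm n = 1 \<and> r > 0 \<and> continuous_on UNIV phi \<and>
        (\<forall>y\<in>ball x r. y \<in> Om \<longleftrightarrow>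
            (y - x) \<bullet> n < phi ((y - x) - ((y - x) \<bullet> n) *\<^sub>R n)))"

text \<open>A mesh is a finite nonempty set of simplices, each given by its vertex set
  (DIM+1 affinely independent points); the closed simplex is its convex hull.\<close>
definition simplicial_mesh :: "'a::euclidean_space set set \<Rightarrow> bool" where
  "simplicial_mesh T \<longleftrightarrow> finite T \<and> T \<noteq> {} \<and>
     (\<forall>K\<in>T. finite K \<and> card K = DIM('a) + 1 \<and> \<not> affine_dependent K) \<and>
     (\<forall>K\<in>T. \<forall>K'\<in>T. convex hull K \<inter> convex hull K' = convex hull (K \<inter> K'))"

definition mesh_union :: "'a::euclidean_space set set \<Rightarrow> 'a set" where
  "mesh_union T = (\<Union>K\<in>T. convex hull K)"

definition mesh_dom :: "'a::euclidean_space set set \<Rightarrow> 'a set" where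
  "mesh_dom T = interior (mesh_union T)"

definition nodes :: "'a::euclidean_space set set \<Rightarrow> 'a set" where
  "nodes T = \<Union>T"

definition meshsize :: "'a::euclidean_space set set \<Rightarrow> real" where
  "meshsize T = Max ((\<lambda>K. diameter (convex hull K)) ` T)"

text \<open>V_h: continuous piecewise linear functions on the mesh (extended by 0
  outside the union of the simplices, so that they are uniquely determined).\<close>
definition Vh :: "'a::euclidean_space set set \<Rightarrow> ('a \<Rightarrow> real) set" where
  "Vh T = {w. continuous_on (mesh_union T) w \<and>
              (\<forall>K\<in>T. \<exists>a b. \<forall>x\<in>convex hull K. w x = a \<bullet> x + b) \<and>
              (\<forall>x. x \<notin> mesh_union T \<longrightarrow> w x = 0)}"

definition hat :: "'a::euclidean_space set set \<Rightarrow> 'a \<Rightarrow> 'a \<Rightarrow> real" where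
  "hat T z = (THE phi. phi \<in> Vh T \<and>
                 (\<forall>y\<in>nodes T. phi y = (if y = z then 1 else 0)))"

definition interp :: "'a::euclidean_space set set \<Rightarrow> ('a \<Rightarrow> real) \<Rightarrow> 'a \<Rightarrow> real" where
  "interp T w = (\<lambda>x. \<Sum>z\<in>nodes T. w z * hat T z x)"

definition sphere_net :: "real \<Rightarrow> 'a::euclidean_space set \<Rightarrow> bool" where
  "sphere_net \<theta> S \<longleftrightarrow> finite S \<and> S \<subseteq> sphere 0 1 \<and> (\<forall>v\<in>S. - v \<in> S) \<and>
     (\<forall>v\<in>sphere 0 1. \<exists>v'\<in>S. norm (v - v') \<le> \<theta>)"

definition inodes :: "'a::euclidean_space set \<Rightarrow> 'a set set \<Rightarrow> real \<Rightarrow> 'a set" where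
  "inodes Om T \<epsilon> = nodes T \<inter> inner_set Om (2 * \<epsilon>)"

definition bnodes :: "'a::euclidean_space set \<Rightarrow> 'a set set \<Rightarrow> real \<Rightarrow> 'a set" where
  "bnodes Om T \<epsilon> = nodes T - inodes Om T \<epsilon>"

definition stencil :: "real \<Rightarrow> 'a::euclidean_space set \<Rightarrow> 'a \<Rightarrow> 'a set" where
  "stencil \<epsilon> S z = insert z ((\<lambda>v. z + \<epsilon> *\<^sub>R v) ` S)"

definition neg_disc_inf_lap ::
  "'a::euclidean_space set set \<Rightarrow> real \<Rightarrow> 'a set \<Rightarrow> ('a \<Rightarrow> real) \<Rightarrow> 'a \<Rightarrow> real" where
  "neg_disc_inf_lap T \<epsilon> S w z =
     (2 * w z - Max (interp T w ` stencil \<epsilon> S z) - Min (interp T w ` stencil \<epsilon> S z)) / \<epsilon>\<^sup>2"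

definition ext_stencil :: "'a::euclidean_space set set \<Rightarrow> real \<Rightarrow> 'a set \<Rightarrow> 'a \<Rightarrow> 'a set" where
  "ext_stencil T \<epsilon> S z =
     insert z {z' \<in> nodes T. \<exists>v\<in>S. hat T z' (z + \<epsilon> *\<^sub>R v) > 0}"

definition cond_M1 :: "'a::euclidean_space set \<Rightarrow> 'a set set \<Rightarrow> real \<Rightarrow> 'a set \<Rightarrow> bool" where
  "cond_M1 Om T \<epsilon> S \<longleftrightarrow>
     (\<forall>A. A \<subseteq> inodes Om T \<epsilon> \<and> A \<noteq> {} \<longrightarrow>
        (\<exists>z\<in>A. \<exists>z'\<in>nodes T - A. z' \<in> ext_stencil T \<epsilon> S z))"

definition holder_on :: "real \<Rightarrow> 'a::metric_space set \<Rightarrow> ('a \<Rightarrow> real) \<Rightarrow> bool" where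
  "holder_on \<alpha> S g \<longleftrightarrow> continuous_on S g \<and>
     (\<exists>L. \<forall>x\<in>S. \<forall>y\<in>S. \<bar>g x - g y\<bar> \<le> L * dist x y powr \<alpha>)"

text \<open>Sup norm on a set (equals the L-infinity norm for the continuous
  functions to which it is applied, on open sets).\<close>
definition supnorm_on :: "'a set \<Rightarrow> ('a \<Rightarrow> real) \<Rightarrow> real" where
  "supnorm_on A w = (SUP x\<in>A. \<bar>w x\<bar>)"

end

theory Submission imports Defs begin

lemma affine_comb_eval:
  fixes a :: "'a::euclidean_space"
  assumes "finite F" "sum \<mu> F = 1"
  shows "a \<bullet> (\<Sum>v\<in>F. \<mu> v *\<^sub>R v) + b = (\<Sum>v\<in>F. \<mu> v * (a \<bullet> v + b))"
proof -
  have "(\<Sum>v\<in>F. \<mu> v * (a \<bullet> v + b)) = (\<Sum>v\<in>F. \<mu> v * (a \<bullet> v)) + (\<Sum>v\<in>F. \<mu> v) * b"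
    by (simp add: algebra_simps sum.distrib sum_distrib_right sum_distrib_left)
  then show ?thesis using assms by (simp add: inner_sum_right)
qed

lemma linear_inner_rep:
  fixes g :: "'a::euclidean_space \<Rightarrow> real"
  assumes "linear g"
  shows "\<exists>a. \<forall>x. g x = a \<bullet> x"
proof -
  have "g x = (\<Sum>i\<in>Basis. g i *\<^sub>R i) \<bullet> x" for x
  proof -
    have "g x = g (\<Sum>i\<in>Basis. (x \<bullet> i) *\<^sub>R i)" by (simp add: euclidean_representation)
    also have "\<dots> = (\<Sum>i\<in>Basis. (x \<bullet> i) * g i)"
      using assms by (simp add: linear_sum linear_scale)
    also have "\<dots> = (\<Sum>i\<in>Basis. g i *\<^sub>R i) \<bullet> x"
      by (simp add: inner_sum_right mult.commute inner_commute)
    finally show ?thesis .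
  qed
  then show ?thesis by blast
qed

lemma bary_exists:
  fixes K :: "'a::euclidean_space set"
  assumes "finite K" "\<not> affine_dependent K"
  shows "\<exists>a b. \<forall>v\<in>K. a \<bullet> v + b = (if v = z then 1 else 0)"
proof (cases "z \<in> K")
  case False
  have "\<forall>v\<in>K. (0::'a) \<bullet> v + 0 = (if v = z then 1 else 0)" using False by auto
  then show ?thesis by blast
next
  case True
  have "independent ((\<lambda>x. -z + x) ` (K - {z}))"
    using affine_dependent_iff_dependent2[OF True] assms(2) by blast
  then have "\<exists>g. linear g \<and> (\<forall>x\<in>(\<lambda>x. -z + x) ` (K - {z}). g x = (-1::real))"
    by (rule linear_independent_extend)
  then obtain g where g: "linear g" "\<forall>x\<in>(\<lambda>x. -z + x) ` (K - {z}). g x = (-1::real)"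
    by blast
  obtain a where a: "\<forall>x. g x = a \<bullet> x" using linear_inner_rep[OF g(1)] by blast
  show ?thesis
  proof (intro exI ballI)
    fix v assume v: "v \<in> K"
    show "a \<bullet> v + (1 - a \<bullet> z) = (if v = z then 1 else 0)"
    proof (cases "v = z")
      case False
      then have "g (-z + v) = -1" using g(2) v by auto
      then have "a \<bullet> (-z + v) = -1" using a by simp
      then show ?thesis using False by (simp add: inner_diff_right)
    qed simp
  qed
qed

lemma vh_comb:
  assumes "w \<in> Vh T" "K \<in> T" "finite K" "sum \<mu> K = 1" "\<forall>v\<in>K. \<mu> v \<ge> 0"
  shows "w (\<Sum>v\<in>K. \<mu> v *\<^sub>R v) = (\<Sum>v\<in>K. \<mu> v * w v)"
proof -
  obtain a b where ab: "\<forall>x\<in>convex hull K. w x = a \<bullet> x + b" using assms(1,2) unfolding Vh_def by blast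
  have mem: "(\<Sum>v\<in>K. \<mu> v *\<^sub>R v) \<in> convex hull K"
    using assms(3-5) by (auto simp: convex_hull_finite)
  have "w (\<Sum>v\<in>K. \<mu> v *\<^sub>R v) = a \<bullet> (\<Sum>v\<in>K. \<mu> v *\<^sub>R v) + b" using ab mem by blast
  also have "\<dots> = (\<Sum>v\<in>K. \<mu> v * (a \<bullet> v + b))" by (rule affine_comb_eval[OF assms(3,4)])
  also have "\<dots> = (\<Sum>v\<in>K. \<mu> v * w v)"
    using ab by (intro sum.cong refl) (simp add: hull_inc)
  finally show ?thesis .
qed


lemma mesh_facts:
  fixes T :: "'a::euclidean_space set set"
  assumes "simplicial_mesh T"
  shows "finite T" "\<And>K. K \<in> T \<Longrightarrow> finite K" "\<And>K. K \<in> T \<Longrightarrow> \<not> affine_dependent K"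
    "\<And>K. K \<in> T \<Longrightarrow> card K = DIM('a) + 1" "T \<noteq> {}"
    "\<And>K K'. K \<in> T \<Longrightarrow> K' \<in> T \<Longrightarrow> convex hull K \<inter> convex hull K' = convex hull (K \<inter> K')"
  using assms unfolding simplicial_mesh_def by auto

lemma finite_nodes: "simplicial_mesh T \<Longrightarrow> finite (nodes T)"
  unfolding nodes_def using mesh_facts(1,2) by blast

lemma hat_exists:
  fixes T :: "'a::euclidean_space set set"
  assumes sm: "simplicial_mesh T"
  shows "\<exists>\<phi>. \<phi> \<in> Vh T \<and> (\<forall>y\<in>nodes T. \<phi> y = (if y = z then 1 else 0))"
proof -
  have "\<forall>K\<in>T. \<exists>ab. \<forall>v\<in>K. fst ab \<bullet> v + snd ab = (if v = z then 1 else (0::real))"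
  proof
    fix K assume "K \<in> T"
    then obtain a b where "\<forall>v\<in>K. a \<bullet> v + b = (if v = z then 1 else (0::real))"
      using bary_exists[OF mesh_facts(2,3)[OF sm]] by blast
    then show "\<exists>ab. \<forall>v\<in>K. fst ab \<bullet> v + snd ab = (if v = z then 1 else (0::real))"
      by (rule_tac x="(a,b)" in exI) simp
  qed
  from bchoice[OF this] obtain ab where ab: "\<forall>K\<in>T. \<forall>v\<in>K. fst (ab K) \<bullet> v + snd (ab K) = (if v = z then 1 else (0::real))"
    by blast
  define L where "L K x = fst (ab K) \<bullet> x + snd (ab K)" for K x
  have Lv: "L K v = (if v = z then 1 else 0)" if "K \<in> T" "v \<in> K" for K v
    using ab that unfolding L_def by blast
  have Lcomb: "L K (\<Sum>v\<in>F. \<mu> v *\<^sub>R v) = (\<Sum>v\<in>F. \<mu> v * (if v = z then 1 else 0))"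
    if "K \<in> T" "finite F" "sum \<mu> F = 1" "F \<subseteq> K" for K F \<mu>
  proof -
    have "L K (\<Sum>v\<in>F. \<mu> v *\<^sub>R v) = (\<Sum>v\<in>F. \<mu> v * L K v)"
      unfolding L_def by (rule affine_comb_eval[OF that(2,3)])
    also have "\<dots> = (\<Sum>v\<in>F. \<mu> v * (if v = z then 1 else 0))"
      using Lv that by (intro sum.cong refl) auto
    finally show ?thesis .
  qed
  have cons: "L K x = L K' x" if "K \<in> T" "K' \<in> T" "x \<in> convex hull K" "x \<in> convex hull K'" for K K' x
  proof -
    have "x \<in> convex hull K \<inter> convex hull K'" using that(3,4) by (rule IntI)
    then have "x \<in> convex hull (K \<inter> K')" by (simp only: mesh_facts(6)[OF sm that(1,2)])
    moreover have fi: "finite (K \<inter> K')" using mesh_facts(2)[OF sm that(1)] by simp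
    ultimately have "\<exists>\<mu>. (\<forall>v\<in>K \<inter> K'. 0 \<le> \<mu> v) \<and> sum \<mu> (K \<inter> K') = 1 \<and> (\<Sum>v\<in>K \<inter> K'. \<mu> v *\<^sub>R v) = x"
      unfolding convex_hull_finite[OF fi] by (elim CollectE)
    then obtain \<mu> where \<mu>: "sum \<mu> (K \<inter> K') = 1" "x = (\<Sum>v\<in>K \<inter> K'. \<mu> v *\<^sub>R v)"
      by blast
    have "L K x = (\<Sum>v\<in>K \<inter> K'. \<mu> v * (if v = z then 1 else 0))"
      unfolding \<mu>(2) by (rule Lcomb[OF that(1) fi \<mu>(1)]) blast
    also have "\<dots> = L K' x"
      unfolding \<mu>(2) by (rule Lcomb[OF that(2) fi \<mu>(1), symmetric]) blast
    finally show ?thesis .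
  qed
  define \<phi> where "\<phi> x = (if x \<in> mesh_union T then L (SOME K. K \<in> T \<and> x \<in> convex hull K) x else 0)" for x
  have \<phi>K: "\<phi> x = L K x" if "K \<in> T" "x \<in> convex hull K" for K x
  proof -
    have mu: "x \<in> mesh_union T" using that unfolding mesh_union_def by blast
    define K0 where "K0 = (SOME K. K \<in> T \<and> x \<in> convex hull K)"
    have "K0 \<in> T \<and> x \<in> convex hull K0"
      unfolding K0_def by (rule someI[of _ K]) (rule conjI; fact)
    then have "L K0 x = L K x" using cons[of K0 K x] that by blast
    then show ?thesis unfolding \<phi>_def K0_def[symmetric] using mu by simp
  qed
  have "\<phi> \<in> Vh T"
    unfolding Vh_def
  proof (intro CollectI conjI allI impI ballI)
    show "continuous_on (mesh_union T) \<phi>"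
      unfolding mesh_union_def
    proof (rule continuous_on_closed_Union)
      show "finite T" by (rule mesh_facts(1)[OF sm])
      fix K assume K: "K \<in> T"
      show "closed (convex hull K)"
        by (rule compact_imp_closed[OF compact_convex_hull[OF finite_imp_compact[OF mesh_facts(2)[OF sm K]]]])
      have "continuous_on (convex hull K) (L K)" unfolding L_def by (intro continuous_intros)
      then show "continuous_on (convex hull K) \<phi>"
        by (rule continuous_on_cong[THEN iffD1, rotated 2]) (auto simp: \<phi>K[OF K])
    qed
  next
    fix K assume K: "K \<in> T"
    show "\<exists>a b. \<forall>x\<in>convex hull K. \<phi> x = a \<bullet> x + b"
      using \<phi>K[OF K] unfolding L_def by blast
  next
    fix x assume "x \<notin> mesh_union T" then show "\<phi> x = 0" unfolding \<phi>_def by simp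
  qed
  moreover have "\<forall>y\<in>nodes T. \<phi> y = (if y = z then 1 else 0)"
  proof
    fix y assume "y \<in> nodes T"
    then obtain K where K: "K \<in> T" "y \<in> K" unfolding nodes_def by blast
    then show "\<phi> y = (if y = z then 1 else 0)" using \<phi>K[OF K(1)] Lv[OF K] by (simp add: hull_inc)
  qed
  ultimately show ?thesis by blast
qed

lemma mesh_point:
  assumes "simplicial_mesh T" "x \<in> mesh_union T"
  shows "\<exists>K\<in>T. \<exists>\<mu>. (\<forall>v\<in>K. \<mu> v \<ge> 0) \<and> sum \<mu> K = 1 \<and> x = (\<Sum>v\<in>K. \<mu> v *\<^sub>R v)"
proof -
  obtain K where K: "K \<in> T" "x \<in> convex hull K" using assms(2) unfolding mesh_union_def by blast
  then have "\<exists>\<mu>. (\<forall>v\<in>K. 0 \<le> \<mu> v) \<and> sum \<mu> K = 1 \<and> (\<Sum>v\<in>K. \<mu> v *\<^sub>R v) = x"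
    using convex_hull_finite[OF mesh_facts(2)[OF assms(1) K(1)]] by blast
  then show ?thesis using K(1) by metis
qed

lemma vh_unique:
  assumes sm: "simplicial_mesh T" and "\<phi> \<in> Vh T" "\<psi> \<in> Vh T" "\<forall>y\<in>nodes T. \<phi> y = \<psi> y"
  shows "\<phi> = \<psi>"
proof
  fix x
  show "\<phi> x = \<psi> x"
  proof (cases "x \<in> mesh_union T")
    case True
    then obtain K \<mu> where K: "K \<in> T" "\<forall>v\<in>K. \<mu> v \<ge> 0" "sum \<mu> K = 1" "x = (\<Sum>v\<in>K. \<mu> v *\<^sub>R v)"
      using mesh_point[OF sm] by blast
    have fK: "finite K" using mesh_facts(2)[OF sm K(1)] .
    have "\<phi> x = (\<Sum>v\<in>K. \<mu> v * \<phi> v)" using vh_comb[OF assms(2) K(1) fK K(3,2)] K(4) by simp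
    also have "\<dots> = (\<Sum>v\<in>K. \<mu> v * \<psi> v)"
      using assms(4) K(1) unfolding nodes_def by (intro sum.cong refl) auto
    also have "\<dots> = \<psi> x" using vh_comb[OF assms(3) K(1) fK K(3,2)] K(4) by simp
    finally show ?thesis .
  next
    case False
    then show ?thesis using assms(2,3) unfolding Vh_def by simp
  qed
qed

lemma hat_props:
  assumes sm: "simplicial_mesh T"
  shows "hat T z \<in> Vh T \<and> (\<forall>y\<in>nodes T. hat T z y = (if y = z then 1 else 0))"
proof -
  have "\<exists>!\<phi>. \<phi> \<in> Vh T \<and> (\<forall>y\<in>nodes T. \<phi> y = (if y = z then 1 else 0))"
  proof (rule ex_ex1I)
    show "\<exists>\<phi>. \<phi> \<in> Vh T \<and> (\<forall>y\<in>nodes T. \<phi> y = (if y = z then 1 else 0))" by (rule hat_exists[OF sm])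
  next
    fix \<phi> \<psi> assume "\<phi> \<in> Vh T \<and> (\<forall>y\<in>nodes T. \<phi> y = (if y = z then 1 else 0))"
      "\<psi> \<in> Vh T \<and> (\<forall>y\<in>nodes T. \<psi> y = (if y = z then 1 else 0))"
    then show "\<phi> = \<psi>" using vh_unique[OF sm] by auto
  qed
  then show ?thesis unfolding hat_def by (rule theI')
qed

lemma interp_comb:
  assumes sm: "simplicial_mesh T" and K: "K \<in> T" "\<forall>v\<in>K. \<mu> v \<ge> 0" "sum \<mu> K = 1"
  shows "interp T c (\<Sum>v\<in>K. \<mu> v *\<^sub>R v) = (\<Sum>v\<in>K. \<mu> v * c v)"
proof -
  have fK: "finite K" using mesh_facts(2)[OF sm K(1)] .
  have KN: "K \<subseteq> nodes T" using K(1) unfolding nodes_def by blast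
  have "interp T c (\<Sum>v\<in>K. \<mu> v *\<^sub>R v) = (\<Sum>z\<in>nodes T. c z * (\<Sum>v\<in>K. \<mu> v * hat T z v))"
    unfolding interp_def using vh_comb[OF hat_props[OF sm, THEN conjunct1] K(1) fK K(3,2)] by simp
  also have "\<dots> = (\<Sum>z\<in>nodes T. \<Sum>v\<in>K. c z * (\<mu> v * (if v = z then 1 else 0)))"
  proof (intro sum.cong refl)
    fix z assume "z \<in> nodes T"
    have "(\<Sum>v\<in>K. \<mu> v * hat T z v) = (\<Sum>v\<in>K. \<mu> v * (if v = z then 1 else 0))"
    proof (intro sum.cong refl)
      fix v assume "v \<in> K"
      then have "v \<in> nodes T" using KN by blast
      then show "\<mu> v * hat T z v = \<mu> v * (if v = z then 1 else 0)"
        using hat_props[OF sm, of z] by simp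
    qed
    then show "c z * (\<Sum>v\<in>K. \<mu> v * hat T z v) = (\<Sum>v\<in>K. c z * (\<mu> v * (if v = z then 1 else 0)))"
      by (simp add: sum_distrib_left)
  qed
  also have "\<dots> = (\<Sum>v\<in>K. \<Sum>z\<in>nodes T. c z * (\<mu> v * (if v = z then 1 else 0)))"
    by (rule sum.swap)
  also have "\<dots> = (\<Sum>v\<in>K. \<mu> v * c v)"
    using KN finite_nodes[OF sm] by (intro sum.cong refl) (auto simp: if_distrib cong: if_cong)
  finally show ?thesis .
qed

lemma interp_out:
  assumes sm: "simplicial_mesh T" and "x \<notin> mesh_union T"
  shows "interp T c x = 0"
  using hat_props[OF sm] assms(2) unfolding interp_def Vh_def by simp

lemma interp_node:
  assumes sm: "simplicial_mesh T" and "y \<in> nodes T"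
  shows "interp T c y = c y"
proof -
  have "interp T c y = (\<Sum>z\<in>nodes T. c z * (if y = z then 1 else 0))"
    unfolding interp_def using hat_props[OF sm] assms(2) by (intro sum.cong refl) auto
  also have "\<dots> = c y" using assms(2) finite_nodes[OF sm] by (simp add: if_distrib cong: if_cong)
  finally show ?thesis .
qed


lemma interp_le:
  assumes sm: "simplicial_mesh T" and c: "\<forall>v\<in>nodes T. c v \<le> m" and m: "0 \<le> m"
  shows "interp T c x \<le> m"
proof (cases "x \<in> mesh_union T")
  case True
  then obtain K \<mu> where K: "K \<in> T" "\<forall>v\<in>K. \<mu> v \<ge> 0" "sum \<mu> K = 1" "x = (\<Sum>v\<in>K. \<mu> v *\<^sub>R v)"
    using mesh_point[OF sm] by blast
  have KN: "K \<subseteq> nodes T" using K(1) unfolding nodes_def by blast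
  have "interp T c x = (\<Sum>v\<in>K. \<mu> v * c v)" using interp_comb[OF sm K(1-3)] K(4) by simp
  also have "\<dots> \<le> (\<Sum>v\<in>K. \<mu> v * m)"
    using K(2) KN c by (intro sum_mono mult_left_mono) auto
  also have "\<dots> = m" using K(3) by (simp add: sum_distrib_right[symmetric])
  finally show ?thesis .
next
  case False
  then show ?thesis using interp_out[OF sm] m by simp
qed

lemma interp_diff: "interp T (\<lambda>x. u x - w x) y = interp T u y - interp T w y"
  unfolding interp_def by (simp add: left_diff_distrib sum_subtractf)

lemma interp_neg: "interp T (\<lambda>x. - u x) = (\<lambda>y. - interp T u y)"
  unfolding interp_def by (simp add: sum_negf)

lemma jensen_sq:
  fixes x0 :: "'a::euclidean_space"
  assumes "finite K" "\<forall>v\<in>K. \<mu> v \<ge> 0" "sum \<mu> K = 1"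
  shows "(norm ((\<Sum>v\<in>K. \<mu> v *\<^sub>R v) - x0))\<^sup>2 \<le> (\<Sum>v\<in>K. \<mu> v * (norm (v - x0))\<^sup>2)"
proof -
  define q where "q = (\<Sum>v\<in>K. \<mu> v *\<^sub>R v) - x0"
  have q: "q = (\<Sum>v\<in>K. \<mu> v *\<^sub>R (v - x0))"
    unfolding q_def using assms(3) by (simp add: scaleR_diff_right sum_subtractf scaleR_sum_left[symmetric])
  have aux: "(\<Sum>v\<in>K. \<mu> v * ((v - x0) \<bullet> q)) = q \<bullet> q"
  proof -
    have "(\<Sum>v\<in>K. \<mu> v * ((v - x0) \<bullet> q)) = (\<Sum>v\<in>K. \<mu> v *\<^sub>R (v - x0)) \<bullet> q"
      by (simp add: inner_sum_left)
    then show ?thesis unfolding q[symmetric] .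
  qed
  have "0 \<le> (\<Sum>v\<in>K. \<mu> v * (norm ((v - x0) - q))\<^sup>2)"
    using assms(2) by (intro sum_nonneg) auto
  also have "\<dots> = (\<Sum>v\<in>K. \<mu> v * (norm (v - x0))\<^sup>2 - 2 * ((\<mu> v *\<^sub>R (v - x0)) \<bullet> q) + \<mu> v * (norm q)\<^sup>2)"
    by (intro sum.cong refl) (simp add: power2_norm_eq_inner inner_diff_left inner_diff_right algebra_simps inner_commute)
  also have "\<dots> = (\<Sum>v\<in>K. \<mu> v * (norm (v - x0))\<^sup>2) - 2 * (q \<bullet> q) + (norm q)\<^sup>2"
    using assms(3) aux by (simp add: sum.distrib sum_subtractf sum_distrib_left[symmetric] sum_distrib_right[symmetric] inner_sum_left[symmetric] q[symmetric])
  also have "\<dots> = (\<Sum>v\<in>K. \<mu> v * (norm (v - x0))\<^sup>2) - (norm q)\<^sup>2"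
    by (simp add: power2_norm_eq_inner)
  finally show ?thesis unfolding q_def by simp
qed

lemma interp_concave:
  fixes x0 :: "'a::euclidean_space"
  assumes sm: "simplicial_mesh T" and A: "A \<ge> 0" and c: "c \<ge> 0"
    and w: "w = (\<lambda>x. c - A * (norm (x - x0))\<^sup>2)" and y: "y \<notin> mesh_union T \<Longrightarrow> A * (norm (y - x0))\<^sup>2 \<le> c"
  shows "interp T w y \<le> w y"
proof (cases "y \<in> mesh_union T")
  case True
  then obtain K \<mu> where K: "K \<in> T" "\<forall>v\<in>K. \<mu> v \<ge> 0" "sum \<mu> K = 1" "y = (\<Sum>v\<in>K. \<mu> v *\<^sub>R v)"
    using mesh_point[OF sm] by blast
  have fK: "finite K" using mesh_facts(2)[OF sm K(1)] .
  have e1: "interp T w y = (\<Sum>v\<in>K. \<mu> v * w v)" using interp_comb[OF sm K(1-3)] K(4) by simp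
  have e2: "(\<Sum>v\<in>K. \<mu> v * w v) = (\<Sum>v\<in>K. \<mu> v * c) - A * (\<Sum>v\<in>K. \<mu> v * (norm (v - x0))\<^sup>2)"
    unfolding w by (simp add: right_diff_distrib sum_subtractf sum_distrib_left mult_ac)
  have e3: "(\<Sum>v\<in>K. \<mu> v * c) = c" by (simp add: sum_distrib_right[symmetric] K(3))
  have e4: "A * (norm (y - x0))\<^sup>2 \<le> A * (\<Sum>v\<in>K. \<mu> v * (norm (v - x0))\<^sup>2)"
    using jensen_sq[OF fK K(2,3), of x0] K(4) A by (simp add: mult_left_mono)
  have "interp T w y \<le> c - A * (norm (y - x0))\<^sup>2" using e1 e2 e3 e4 by linarith
  then show ?thesis unfolding w by simp
next
  case False
  then show ?thesis using interp_out[OF sm] y w by simp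
qed

lemma norm_step:
  fixes d v :: "'a::euclidean_space"
  assumes "norm v = 1"
  shows "(norm (d + e *\<^sub>R v))\<^sup>2 = (norm d)\<^sup>2 + 2 * e * (v \<bullet> d) + e\<^sup>2"
proof -
  have "v \<bullet> v = 1" using assms by (simp add: norm_eq_1)
  then show ?thesis by (simp add: power2_norm_eq_inner inner_add_left inner_add_right algebra_simps inner_commute) (simp add: power2_eq_square)
qed

lemma barrier:
  fixes z0 x0 :: "'a::euclidean_space"
  assumes eps: "\<epsilon> > 0" and A: "A \<ge> 0" and S: "finite S" "S \<noteq> {}" "\<forall>v\<in>S. - v \<in> S" "\<forall>v\<in>S. norm v = 1"
    and W: "W = (\<lambda>x. c - A * (norm (x - x0))\<^sup>2)" and F0: "F z0 = W z0"
    and FW: "\<forall>y\<in>stencil \<epsilon> S z0. F y \<le> W y"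
  shows "A * \<epsilon>\<^sup>2 \<le> 2 * W z0 - Max (F ` stencil \<epsilon> S z0) - Min (F ` stencil \<epsilon> S z0)"
proof -
  define St where "St = stencil \<epsilon> S z0"
  have St: "St = insert z0 ((\<lambda>v. z0 + \<epsilon> *\<^sub>R v) ` S)" unfolding St_def stencil_def by simp
  have fin: "finite (F ` St)" using S(1) St by simp
  have ne: "F ` St \<noteq> {}" using St by simp
  define d where "d = z0 - x0"
  have Wv: "W (z0 + \<epsilon> *\<^sub>R v) = W z0 - A * (2 * \<epsilon> * (v \<bullet> d) + \<epsilon>\<^sup>2)" if "v \<in> S" for v
  proof -
    have e: "z0 + \<epsilon> *\<^sub>R v - x0 = d + \<epsilon> *\<^sub>R v" unfolding d_def by (simp add: algebra_simps)
    have "(norm (z0 + \<epsilon> *\<^sub>R v - x0))\<^sup>2 = (norm d)\<^sup>2 + 2 * \<epsilon> * (v \<bullet> d) + \<epsilon>\<^sup>2"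
      unfolding e using norm_step[of v d \<epsilon>] S(4) that by simp
    then have h': "(norm (z0 + \<epsilon> *\<^sub>R v - x0))\<^sup>2 = (norm (z0 - x0))\<^sup>2 + 2 * \<epsilon> * (v \<bullet> d) + \<epsilon>\<^sup>2"
      unfolding d_def .
    show ?thesis by (simp only: W h') (simp add: algebra_simps)
  qed
  have mem: "z0 + \<epsilon> *\<^sub>R v \<in> St" if "v \<in> S" for v using that St by blast
  have z0St: "z0 \<in> St" using St by blast
  have Minle: "Min (F ` St) \<le> F y" if "y \<in> St" for y using fin that by simp
  have FW': "F y \<le> W y" if "y \<in> St" for y using FW that unfolding St_def by blast
  obtain ys where ys: "ys \<in> St" "F ys = Max (F ` St)" using Max_in[OF fin ne] by auto
  have "Max (F ` St) + Min (F ` St) \<le> 2 * W z0 - A * \<epsilon>\<^sup>2"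
  proof (cases "ys = z0")
    case True
    obtain v0 where v0: "v0 \<in> S" using S(2) by blast
    define v where "v = (if v0 \<bullet> d \<ge> 0 then v0 else - v0)"
    have v: "v \<in> S" "v \<bullet> d \<ge> 0" using v0 S(3) unfolding v_def by auto
    have "Min (F ` St) \<le> W z0 - A * (2 * \<epsilon> * (v \<bullet> d) + \<epsilon>\<^sup>2)"
      using Minle[OF mem[OF v(1)]] FW'[OF mem[OF v(1)]] Wv[OF v(1)] by simp
    moreover have "A * (2 * \<epsilon> * (v \<bullet> d)) \<ge> 0" using A eps v(2) by simp
    moreover have "Max (F ` St) = W z0" using ys True F0 by simp
    ultimately show ?thesis by (simp add: algebra_simps)
  next
    case False
    then obtain v where v: "v \<in> S" "ys = z0 + \<epsilon> *\<^sub>R v" using ys(1) St by blast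
    have "Max (F ` St) \<le> W z0 - A * (2 * \<epsilon> * (v \<bullet> d) + \<epsilon>\<^sup>2)"
      using ys FW'[OF ys(1)] Wv[OF v(1)] v(2) by simp
    moreover have mv: "- v \<in> S" using S(3) v(1) by blast
    have "Min (F ` St) \<le> W z0 - A * (2 * \<epsilon> * ((- v) \<bullet> d) + \<epsilon>\<^sup>2)"
      using Minle[OF mem[OF mv]] FW'[OF mem[OF mv]] Wv[OF mv] by simp
    moreover have "A * (2 * \<epsilon> * (v \<bullet> d) + \<epsilon>\<^sup>2) + A * (2 * \<epsilon> * ((- v) \<bullet> d) + \<epsilon>\<^sup>2) = 2 * (A * \<epsilon>\<^sup>2)"
      by (simp add: algebra_simps)
    moreover have "A * \<epsilon>\<^sup>2 \<ge> 0" using A by simp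
    ultimately show ?thesis by linarith
  qed
  then show ?thesis unfolding St_def by simp
qed

lemma core:
  fixes T :: "'a::euclidean_space set set"
  assumes sm: "simplicial_mesh T" and eps: "\<epsilon> > 0"
    and S: "finite S" "S \<noteq> {}" "\<forall>v\<in>S. - v \<in> S" "\<forall>v\<in>S. norm v = 1"
    and I: "I \<subseteq> nodes T" and R: "\<forall>z\<in>nodes T. norm (z - x0) + \<epsilon> \<le> R"
    and G: "G \<ge> 0" and A: "A > 0"
    and eq: "\<forall>z\<in>I. neg_disc_inf_lap T \<epsilon> S u z = f z" and fA: "\<forall>z\<in>I. f z < A"
    and bd: "\<forall>z\<in>nodes T - I. u z \<le> G"
  shows "\<forall>z\<in>nodes T. u z \<le> G + A * R\<^sup>2"
proof (rule ccontr)
  assume "\<not> (\<forall>z\<in>nodes T. u z \<le> G + A * R\<^sup>2)"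
  then obtain z1 where z1: "z1 \<in> nodes T" "u z1 > G + A * R\<^sup>2" by auto
  define c where "c = G + A * R\<^sup>2"
  define w where "w = (\<lambda>x. c - A * (norm (x - x0))\<^sup>2)"
  have wle: "w x \<le> c" for x unfolding w_def using A by simp
  define N where "N = nodes T"
  have finN: "finite N" unfolding N_def by (rule finite_nodes[OF sm])
  have finI: "finite ((\<lambda>z. u z - w z) ` N)" using finN by simp
  have neI: "(\<lambda>z. u z - w z) ` N \<noteq> {}" using z1 unfolding N_def by auto
  define m where "m = Max ((\<lambda>z. u z - w z) ` N)"
  obtain z0 where z0: "z0 \<in> N" "u z0 - w z0 = m" using Max_in[OF finI neI] unfolding m_def by auto
  have mge: "\<forall>z\<in>N. u z - w z \<le> m" unfolding m_def using finI by simp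
  have mpos: "m > 0" using mge z1 wle[of z1] unfolding N_def c_def by fastforce
  have Rn: "norm (z - x0) \<le> R" if "z \<in> N" for z using R that eps unfolding N_def by fastforce
  have R0: "R \<ge> 0" using Rn[OF z0(1)] norm_ge_zero[of "z0 - x0"] by linarith
  have sqR: "(norm (y - x0))\<^sup>2 \<le> R\<^sup>2" if "norm (y - x0) \<le> R" for y
    using that by (intro power_mono) auto
  have wG: "w z \<ge> G" if "norm (z - x0) \<le> R" for z
  proof -
    have "A * (norm (z - x0))\<^sup>2 \<le> A * R\<^sup>2" using sqR[OF that] A by (simp add: mult_left_mono)
    then show ?thesis unfolding w_def c_def by simp
  qed
  have z0I: "z0 \<in> I"
  proof (rule ccontr)
    assume "z0 \<notin> I"
    then have "u z0 \<le> G" using bd z0(1) unfolding N_def by blast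
    then show False using wG[OF Rn[OF z0(1)]] z0(2) mpos by linarith
  qed
  define St where "St = stencil \<epsilon> S z0"
  have St: "St = insert z0 ((\<lambda>v. z0 + \<epsilon> *\<^sub>R v) ` S)" unfolding St_def stencil_def by simp
  have finSt: "finite St" using S(1) St by simp
  have stR: "norm (y - x0) \<le> R" if yS: "y \<in> St" for y
  proof -
    have r0: "norm (z0 - x0) + \<epsilon> \<le> R" using R z0(1) unfolding N_def by blast
    show ?thesis
    proof (cases "y = z0")
      case True then show ?thesis using r0 eps by simp
    next
      case False
      then obtain v where v: "v \<in> S" "y = z0 + \<epsilon> *\<^sub>R v" using yS St by blast
      have "norm (y - x0) = norm ((z0 - x0) + \<epsilon> *\<^sub>R v)" using v(2) by (simp add: algebra_simps)
      also have "\<dots> \<le> norm (z0 - x0) + norm (\<epsilon> *\<^sub>R v)" by (rule norm_triangle_ineq)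
      also have "norm (\<epsilon> *\<^sub>R v) = \<epsilon>" using S(4) v(1) eps by simp
      finally show ?thesis using r0 by simp
    qed
  qed
  have c0: "c \<ge> 0" unfolding c_def using G A by simp
  have iw: "interp T w y \<le> w y" if "y \<in> St" for y
  proof (rule interp_concave[OF sm _ c0 w_def])
    show "A \<ge> 0" using A by simp
    show "A * (norm (y - x0))\<^sup>2 \<le> c"
    proof -
      have "A * (norm (y - x0))\<^sup>2 \<le> A * R\<^sup>2"
        using mult_left_mono[OF sqR[OF stR[OF that]], of A] A by simp
      then show ?thesis using G unfolding c_def by linarith
    qed
  qed
  have iu: "interp T u y \<le> interp T w y + m" for y
  proof -
    have "interp T (\<lambda>x. u x - w x) y \<le> m"
      by (rule interp_le[OF sm]) (use mge mpos in \<open>auto simp: N_def\<close>)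
    then show ?thesis unfolding interp_diff by simp
  qed
  have iw0: "interp T w z0 = w z0" using interp_node[OF sm] z0(1) unfolding N_def by blast
  have bar: "A * \<epsilon>\<^sup>2 \<le> 2 * w z0 - Max (interp T w ` St) - Min (interp T w ` St)"
  proof -
    have A0: "A \<ge> 0" using A by simp
    have "\<forall>y\<in>stencil \<epsilon> S z0. interp T w y \<le> w y" using iw unfolding St_def by blast
    from barrier[OF eps A0 S w_def iw0 this] show ?thesis unfolding St_def .
  qed
  have finw: "finite (interp T w ` St)" and finu: "finite (interp T u ` St)" using finSt by auto
  have new: "interp T w ` St \<noteq> {}" and neu: "interp T u ` St \<noteq> {}" using St by auto
  have Mu: "Max (interp T u ` St) \<le> Max (interp T w ` St) + m"
  proof (rule Max.boundedI[OF finu neu])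
    fix a assume "a \<in> interp T u ` St"
    then obtain y where y: "y \<in> St" "a = interp T u y" by blast
    have "interp T w y \<le> Max (interp T w ` St)" using finw y(1) by simp
    then show "a \<le> Max (interp T w ` St) + m" using iu[of y] y(2) by simp
  qed
  obtain yw where yw: "yw \<in> St" "interp T w yw = Min (interp T w ` St)"
    using Min_in[OF finw new] by auto
  have mu: "Min (interp T u ` St) \<le> Min (interp T w ` St) + m"
  proof -
    have "Min (interp T u ` St) \<le> interp T u yw" using finu yw(1) by simp
    then show ?thesis using iu[of yw] yw(2) by simp
  qed
  have "(2 * u z0 - Max (interp T u ` St) - Min (interp T u ` St)) / \<epsilon>\<^sup>2 = f z0"
    using eq z0I unfolding neg_disc_inf_lap_def St_def by blast
  then have "(2 * u z0 - Max (interp T u ` St) - Min (interp T u ` St)) / \<epsilon>\<^sup>2 < A"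
    using fA z0I by simp
  then have "2 * u z0 - Max (interp T u ` St) - Min (interp T u ` St) < A * \<epsilon>\<^sup>2"
    using eps by (simp add: divide_less_eq)
  then show False using bar Mu mu z0(2) by linarith
qed

lemma ball_in:
  fixes Om :: "'a::euclidean_space set"
  assumes "x \<in> Om" "dist x y < infdist x (frontier Om)"
  shows "y \<in> Om"
proof (rule ccontr)
  assume ny: "y \<notin> Om"
  have "closed_segment x y \<inter> frontier Om \<noteq> {}"
    by (rule connected_Int_frontier) (use assms(1) ny in auto)
  then obtain p where p: "p \<in> closed_segment x y" "p \<in> frontier Om" by blast
  have "dist p x \<le> dist x y" using dist_in_closed_segment[OF p(1)] by blast
  moreover have "infdist x (frontier Om) \<le> dist x p" by (rule infdist_le[OF p(2)])
  ultimately show False using assms(2) by (simp add: dist_commute)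
qed

lemma mesh_union_closure:
  fixes T :: "'a::euclidean_space set set"
  assumes sm: "simplicial_mesh T" and dom: "mesh_dom T \<subseteq> Om"
  shows "mesh_union T \<subseteq> closure Om" "mesh_dom T \<noteq> {}"
proof -
  have intK: "interior (convex hull K) \<noteq> {}" if "K \<in> T" for K
    using interior_convex_hull_eq_empty[of K] mesh_facts(3,4)[OF sm that] by simp
  have sub: "interior (convex hull K) \<subseteq> mesh_dom T" if "K \<in> T" for K
    unfolding mesh_dom_def by (rule interior_mono) (use that in \<open>auto simp: mesh_union_def\<close>)
  show "mesh_union T \<subseteq> closure Om"
  proof
    fix x assume "x \<in> mesh_union T"
    then obtain K where K: "K \<in> T" "x \<in> convex hull K" unfolding mesh_union_def by blast
    have "x \<in> closure (convex hull K)" using K(2) closure_subset by blast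
    also have "closure (convex hull K) = closure (interior (convex hull K))"
      using convex_closure_interior[OF convex_convex_hull intK[OF K(1)]] by simp
    also have "\<dots> \<subseteq> closure Om" using sub[OF K(1)] dom by (intro closure_mono) blast
    finally show "x \<in> closure Om" .
  qed
  obtain K where "K \<in> T" using mesh_facts(5)[OF sm] by blast
  then show "mesh_dom T \<noteq> {}" using intK sub by blast
qed

lemma nodes_sub: "nodes T \<subseteq> mesh_union T"
  unfolding nodes_def mesh_union_def by (auto simp: hull_inc)

lemma meshsize_pos:
  fixes T :: "'a::euclidean_space set set"
  assumes sm: "simplicial_mesh T"
  shows "meshsize T > 0"
proof -
  obtain K where K: "K \<in> T" using mesh_facts(5)[OF sm] by blast
  have fK: "finite K" and cK: "card K = DIM('a) + 1" using mesh_facts(2,4)[OF sm K] by auto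
  have "K \<noteq> {}" using cK by auto
  then obtain a where a: "a \<in> K" by blast
  have "card (K - {a}) = DIM('a)" using cK a fK by simp
  then have "K - {a} \<noteq> {}" using DIM_positive[where 'a='a] by (metis card.empty less_irrefl)
  then obtain b where b: "b \<in> K" "b \<noteq> a" by blast
  have "dist a b \<le> diameter (convex hull K)"
    by (rule diameter_bounded_bound) (use fK a b in \<open>auto simp: bounded_convex_hull finite_imp_bounded hull_inc\<close>)
  also have "diameter (convex hull K) \<le> meshsize T"
    unfolding meshsize_def by (rule Max_ge) (use mesh_facts(1)[OF sm] K in auto)
  finally have "dist a b \<le> meshsize T" .
  moreover have "dist a b > 0" using b by simp
  ultimately show ?thesis by linarith
qed

lemma bnodes_ne:
  fixes T :: "'a::euclidean_space set set"
  assumes sm: "simplicial_mesh T" and sub1: "inner_set Om (meshsize T) \<subseteq> mesh_dom T"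
    and he: "meshsize T \<le> \<epsilon>"
  shows "bnodes Om T \<epsilon> \<noteq> {}"
proof
  assume emp: "bnodes Om T \<epsilon> = {}"
  then have allin: "\<forall>z\<in>nodes T. z \<in> inner_set Om (2 * \<epsilon>)" unfolding bnodes_def inodes_def by blast
  define h where "h = meshsize T"
  have h0: "h > 0" unfolding h_def by (rule meshsize_pos[OF sm])
  have eps: "\<epsilon> > 0" using h0 he unfolding h_def by simp
  obtain e :: 'a where eB: "e \<in> Basis" using nonempty_Basis by blast
  have ne1: "norm e = 1" using eB by simp
  have finN: "finite ((\<lambda>z. e \<bullet> z) ` nodes T)" using finite_nodes[OF sm] by simp
  obtain K0 where K0: "K0 \<in> T" using mesh_facts(5)[OF sm] by blast
  have "K0 \<noteq> {}" using mesh_facts(4)[OF sm K0] by auto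
  then have neN: "(\<lambda>z. e \<bullet> z) ` nodes T \<noteq> {}" using K0 unfolding nodes_def by blast
  define M where "M = Max ((\<lambda>z. e \<bullet> z) ` nodes T)"
  obtain z where z: "z \<in> nodes T" "e \<bullet> z = M" using Max_in[OF finN neN] unfolding M_def by auto
  have Mge: "\<forall>v\<in>nodes T. e \<bullet> v \<le> M" unfolding M_def using finN by simp
  have zI: "z \<in> Om" "infdist z (frontier Om) > 2 * \<epsilon>" using allin z(1) unfolding inner_set_def by auto
  define y where "y = z + (\<epsilon> / 2) *\<^sub>R e"
  have dzy: "dist z y = \<epsilon> / 2" unfolding y_def using ne1 eps by (simp add: dist_norm)
  have yOm: "y \<in> Om" by (rule ball_in[OF zI(1)]) (use dzy zI(2) eps in simp)
  have "infdist z (frontier Om) \<le> infdist y (frontier Om) + dist z y" by (rule infdist_triangle)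
  then have "infdist y (frontier Om) > h" using dzy zI(2) he eps unfolding h_def by linarith
  then have "y \<in> inner_set Om h" using yOm unfolding inner_set_def by simp
  then have "y \<in> mesh_union T" using sub1 interior_subset unfolding h_def mesh_dom_def by blast
  then obtain K \<mu> where K: "K \<in> T" "\<forall>v\<in>K. \<mu> v \<ge> 0" "sum \<mu> K = 1" "y = (\<Sum>v\<in>K. \<mu> v *\<^sub>R v)"
    using mesh_point[OF sm] by blast
  have KN: "K \<subseteq> nodes T" using K(1) unfolding nodes_def by blast
  have "e \<bullet> y = (\<Sum>v\<in>K. \<mu> v * (e \<bullet> v))" using K(4) by (simp add: inner_sum_right)
  also have "\<dots> \<le> (\<Sum>v\<in>K. \<mu> v * M)" using K(2) KN Mge by (intro sum_mono mult_left_mono) auto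
  also have "\<dots> = M" using K(3) by (simp add: sum_distrib_right[symmetric])
  finally have "e \<bullet> y \<le> M" .
  moreover have "e \<bullet> y = M + \<epsilon> / 2" unfolding y_def using z(2) eB by (simp add: inner_add_right)
  ultimately show False using eps by simp
qed

lemma max_neg:
  fixes X :: "real set"
  assumes "finite X" "X \<noteq> {}"
  shows "Max (uminus ` X) = - Min X" "Min (uminus ` X) = - Max X"
proof -
  show "Max (uminus ` X) = - Min X"
    by (rule Max_eqI) (use assms in auto)
  show "Min (uminus ` X) = - Max X"
    by (rule Min_eqI) (use assms in auto)
qed

lemma neg_lap:
  assumes "finite S"
  shows "neg_disc_inf_lap T \<epsilon> S (\<lambda>x. - u x) z = - neg_disc_inf_lap T \<epsilon> S u z"
proof -
  define St where "St = stencil \<epsilon> S z"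
  have fin: "finite (interp T u ` St)" "interp T u ` St \<noteq> {}"
    using assms unfolding St_def stencil_def by auto
  have im: "(\<lambda>y. - interp T u y) ` St = uminus ` (interp T u ` St)" by auto
  show ?thesis unfolding neg_disc_inf_lap_def interp_neg St_def[symmetric] im max_neg[OF fin] minus_divide_left
    by (rule arg_cong[where f="\<lambda>x. x / \<epsilon>\<^sup>2"]) simp
qed


theorem lemma3p4:
  fixes Om :: "'a::euclidean_space set"
  assumes "open Om" and "connected Om" and "bounded Om" and "Om \<noteq> {}"
    and "continuous_boundary Om"
  shows "\<exists>C. \<forall>(T :: 'a set set) (\<epsilon> :: real) (\<theta> :: real) (S :: 'a set)
              (f :: 'a \<Rightarrow> real) (g :: 'a \<Rightarrow> real) (gt :: real \<Rightarrow> 'a \<Rightarrow> real) (u :: 'a \<Rightarrow> real).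
     simplicial_mesh T \<and>
     inner_set Om (meshsize T) \<subseteq> mesh_dom T \<and> mesh_dom T \<subseteq> Om \<and>
     meshsize T \<le> \<epsilon> \<and> \<epsilon> \<le> diameter Om \<and> 0 < \<theta> \<and> \<theta> \<le> 1 \<and>
     sphere_net \<theta> S \<and>
     \<comment> \<open>(RHS.1)\<close>
     continuous_on Om f \<and> bounded (f ` Om) \<and>
     \<comment> \<open>(RHS.2)\<close>
     ((\<exists>c<0. \<forall>x\<in>Om. f x \<le> c) \<or> (\<exists>c>0. \<forall>x\<in>Om. f x \<ge> c) \<or> (\<forall>x\<in>Om. f x = 0)) \<and>
     \<comment> \<open>(BC.1)\<close>
     continuous_on (frontier Om) g \<and>
     \<comment> \<open>(BC.2)\<close>
     (\<forall>e>0. continuous_on (closure Om) (gt e)) \<and>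
     (\<forall>\<alpha>. 0 \<le> \<alpha> \<and> \<alpha> \<le> 1 \<and> holder_on \<alpha> (frontier Om) g \<longrightarrow>
        (\<forall>e>0. holder_on \<alpha> (closure Om) (gt e)) \<and>
        (\<exists>C'. \<forall>e>0. \<forall>x\<in>frontier Om. \<bar>g x - gt e x\<bar> \<le> C' * e powr \<alpha>)) \<and>
     \<comment> \<open>(M.1) in case (RHS.2b)\<close>
     ((\<forall>x\<in>Om. f x = 0) \<longrightarrow> cond_M1 Om T \<epsilon> S) \<and>
     \<comment> \<open>u solves the discrete problem\<close>
     u \<in> Vh T \<and>
     (\<forall>z\<in>inodes Om T \<epsilon>. neg_disc_inf_lap T \<epsilon> S u z = f z) \<and>
     (\<forall>z\<in>bnodes Om T \<epsilon>. u z = gt \<epsilon> z)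
     \<longrightarrow> supnorm_on (mesh_dom T) u
           \<le> C * supnorm_on (mesh_dom T) f + Max ((\<lambda>z. \<bar>gt \<epsilon> z\<bar>) ` bnodes Om T \<epsilon>)"
proof -
  define D where "D = diameter Om"
  define R where "R = 2 * D"
  obtain x0 where x0: "x0 \<in> Om" using assms(4) by blast
  have bOm: "bounded (closure Om)" using assms(3) by (rule bounded_closure)
  show ?thesis
  proof (rule exI[of _ "R\<^sup>2"], intro allI impI)
    fix T :: "'a set set" and \<epsilon> \<theta> :: real and S :: "'a set" and f g :: "'a \<Rightarrow> real"
      and gt :: "real \<Rightarrow> 'a \<Rightarrow> real" and u :: "'a \<Rightarrow> real"
    assume H: "simplicial_mesh T \<and>
     inner_set Om (meshsize T) \<subseteq> mesh_dom T \<and> mesh_dom T \<subseteq> Om \<and>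
     meshsize T \<le> \<epsilon> \<and> \<epsilon> \<le> diameter Om \<and> 0 < \<theta> \<and> \<theta> \<le> 1 \<and>
     sphere_net \<theta> S \<and>
     continuous_on Om f \<and> bounded (f ` Om) \<and>
     ((\<exists>c<0. \<forall>x\<in>Om. f x \<le> c) \<or> (\<exists>c>0. \<forall>x\<in>Om. f x \<ge> c) \<or> (\<forall>x\<in>Om. f x = 0)) \<and>
     continuous_on (frontier Om) g \<and>
     (\<forall>e>0. continuous_on (closure Om) (gt e)) \<and>
     (\<forall>\<alpha>. 0 \<le> \<alpha> \<and> \<alpha> \<le> 1 \<and> holder_on \<alpha> (frontier Om) g \<longrightarrow>
        (\<forall>e>0. holder_on \<alpha> (closure Om) (gt e)) \<and>
        (\<exists>C'. \<forall>e>0. \<forall>x\<in>frontier Om. \<bar>g x - gt e x\<bar> \<le> C' * e powr \<alpha>)) \<and>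
     ((\<forall>x\<in>Om. f x = 0) \<longrightarrow> cond_M1 Om T \<epsilon> S) \<and>
     u \<in> Vh T \<and>
     (\<forall>z\<in>inodes Om T \<epsilon>. neg_disc_inf_lap T \<epsilon> S u z = f z) \<and>
     (\<forall>z\<in>bnodes Om T \<epsilon>. u z = gt \<epsilon> z)"
    have sm: "simplicial_mesh T" using H by blast
    have sub1: "inner_set Om (meshsize T) \<subseteq> mesh_dom T" using H by blast
    have dom: "mesh_dom T \<subseteq> Om" using H by blast
    have he: "meshsize T \<le> \<epsilon>" using H by blast
    have eD: "\<epsilon> \<le> D" using H unfolding D_def by blast
    have net: "sphere_net \<theta> S" using H by blast
    have fb: "bounded (f ` Om)" using H by blast
    have Vu: "u \<in> Vh T" using H by blast
    have eq: "\<forall>z\<in>inodes Om T \<epsilon>. neg_disc_inf_lap T \<epsilon> S u z = f z" using H by blast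
    have bc: "\<forall>z\<in>bnodes Om T \<epsilon>. u z = gt \<epsilon> z" using H by blast
    have h0: "meshsize T > 0" by (rule meshsize_pos[OF sm])
    have eps: "\<epsilon> > 0" using h0 he by simp
    have Sfin: "finite S" and Ssph: "S \<subseteq> sphere 0 1" and Ssym: "\<forall>v\<in>S. - v \<in> S"
      and Snet: "\<forall>v\<in>sphere 0 1. \<exists>v'\<in>S. norm (v - v') \<le> \<theta>"
      using net unfolding sphere_net_def by auto
    have Sunit: "\<forall>v\<in>S. norm v = 1" using Ssph by auto
    have Sne: "S \<noteq> {}"
    proof -
      obtain b :: 'a where "b \<in> Basis" using nonempty_Basis by blast
      then have "b \<in> sphere 0 1" by simp
      then show ?thesis using Snet by blast
    qed
    have Rn: "\<forall>z\<in>nodes T. norm (z - x0) + \<epsilon> \<le> R"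
    proof
      fix z assume "z \<in> nodes T"
      then have "z \<in> closure Om" using nodes_sub mesh_union_closure(1)[OF sm dom] by blast
      moreover have "x0 \<in> closure Om" using x0 closure_subset by blast
      ultimately have "dist z x0 \<le> diameter (closure Om)" using diameter_bounded_bound[OF bOm] by blast
      then have "norm (z - x0) \<le> D" unfolding D_def diameter_closure[OF assms(3)] by (simp add: dist_norm)
      then show "norm (z - x0) + \<epsilon> \<le> R" using eD unfolding R_def by simp
    qed
    have Isub: "inodes Om T \<epsilon> \<subseteq> nodes T" unfolding inodes_def by blast
    have bdef: "nodes T - inodes Om T \<epsilon> = bnodes Om T \<epsilon>" unfolding bnodes_def by simp
    define G where "G = Max ((\<lambda>z. \<bar>gt \<epsilon> z\<bar>) ` bnodes Om T \<epsilon>)"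
    have finB: "finite ((\<lambda>z. \<bar>gt \<epsilon> z\<bar>) ` bnodes Om T \<epsilon>)"
      using finite_nodes[OF sm] unfolding bnodes_def by simp
    have Gge: "\<forall>z\<in>bnodes Om T \<epsilon>. \<bar>gt \<epsilon> z\<bar> \<le> G" unfolding G_def using finB by simp
    have G0: "G \<ge> 0"
    proof -
      obtain b where "b \<in> bnodes Om T \<epsilon>" using bnodes_ne[OF sm sub1 he] by blast
      then show ?thesis using Gge by force
    qed
    define Sf where "Sf = supnorm_on (mesh_dom T) f"
    have dne: "mesh_dom T \<noteq> {}" using mesh_union_closure(2)[OF sm dom] .
    obtain B where B: "\<forall>x\<in>Om. norm (f x) \<le> B" using fb unfolding bounded_iff by auto
    have bdd: "bdd_above ((\<lambda>x. \<bar>f x\<bar>) ` mesh_dom T)"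
      using B dom by (intro bdd_aboveI[of _ B]) auto
    have Idom: "inodes Om T \<epsilon> \<subseteq> mesh_dom T"
    proof
      fix z assume "z \<in> inodes Om T \<epsilon>"
      then have "z \<in> inner_set Om (meshsize T)" using he eps unfolding inodes_def inner_set_def by auto
      then show "z \<in> mesh_dom T" using sub1 by blast
    qed
    have fz: "\<bar>f z\<bar> \<le> Sf" if "z \<in> inodes Om T \<epsilon>" for z
      unfolding Sf_def supnorm_on_def by (rule cSUP_upper[OF _ bdd]) (use Idom that in blast)
    have Sf0: "Sf \<ge> 0"
    proof -
      obtain x where "x \<in> mesh_dom T" using dne by blast
      then have "\<bar>f x\<bar> \<le> Sf" unfolding Sf_def supnorm_on_def by (rule cSUP_upper[OF _ bdd])
      then show ?thesis by simp
    qed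
    have nodal: "\<bar>u z\<bar> \<le> G + Sf * R\<^sup>2" if zN: "z \<in> nodes T" for z
    proof (rule field_le_epsilon)
      fix \<delta> :: real assume d: "\<delta> > 0"
      define A where "A = Sf + \<delta> / (R\<^sup>2 + 1)"
      have Apos: "A > 0" unfolding A_def using Sf0 d by (simp add: add_nonneg_pos)
      have AR: "A * R\<^sup>2 \<le> Sf * R\<^sup>2 + \<delta>"
      proof -
        have p: "R\<^sup>2 + 1 > 0" by (simp add: add_nonneg_pos)
        have "\<delta> / (R\<^sup>2 + 1) * R\<^sup>2 = \<delta> * R\<^sup>2 / (R\<^sup>2 + 1)" by simp
        also have "\<dots> \<le> \<delta>" using p d by (simp add: pos_divide_le_eq algebra_simps)
        finally have "\<delta> / (R\<^sup>2 + 1) * R\<^sup>2 \<le> \<delta>" .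
        then show ?thesis unfolding A_def by (simp add: algebra_simps)
      qed
      have fA: "\<forall>z\<in>inodes Om T \<epsilon>. f z < A" and fA': "\<forall>z\<in>inodes Om T \<epsilon>. - f z < A"
      proof -
        have dp: "\<delta> / (R\<^sup>2 + 1) > 0" using d by (simp add: add_nonneg_pos)
        show "\<forall>z\<in>inodes Om T \<epsilon>. f z < A" "\<forall>z\<in>inodes Om T \<epsilon>. - f z < A"
          using fz dp unfolding A_def by (force simp: abs_le_iff)+
      qed
      have bd: "\<forall>z\<in>nodes T - inodes Om T \<epsilon>. u z \<le> G" and bd': "\<forall>z\<in>nodes T - inodes Om T \<epsilon>. - u z \<le> G"
        using bc Gge unfolding bdef by (auto simp: abs_le_iff)
      have eq': "\<forall>z\<in>inodes Om T \<epsilon>. neg_disc_inf_lap T \<epsilon> S (\<lambda>x. - u x) z = - f z"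
        using eq neg_lap[OF Sfin] by simp
      have c1: "u z \<le> G + A * R\<^sup>2"
        using core[OF sm eps Sfin Sne Ssym Sunit Isub Rn G0 Apos eq fA bd] zN by blast
      have c2: "- u z \<le> G + A * R\<^sup>2"
        using core[OF sm eps Sfin Sne Ssym Sunit Isub Rn G0 Apos eq' fA' bd'] zN by blast
      show "\<bar>u z\<bar> \<le> G + Sf * R\<^sup>2 + \<delta>" using c1 c2 AR by (simp add: abs_le_iff)
    qed
    have "supnorm_on (mesh_dom T) u \<le> R\<^sup>2 * Sf + G"
      unfolding supnorm_on_def
    proof (rule cSUP_least[OF dne])
      fix x assume "x \<in> mesh_dom T"
      then have "x \<in> mesh_union T" unfolding mesh_dom_def using interior_subset by blast
      then obtain K \<mu> where K: "K \<in> T" "\<forall>v\<in>K. \<mu> v \<ge> 0" "sum \<mu> K = 1" "x = (\<Sum>v\<in>K. \<mu> v *\<^sub>R v)"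
        using mesh_point[OF sm] by blast
      have fK: "finite K" using mesh_facts(2)[OF sm K(1)] .
      have KN: "K \<subseteq> nodes T" using K(1) unfolding nodes_def by blast
      have "\<bar>u x\<bar> = \<bar>\<Sum>v\<in>K. \<mu> v * u v\<bar>" using vh_comb[OF Vu K(1) fK K(3,2)] K(4) by simp
      also have "\<dots> \<le> (\<Sum>v\<in>K. \<bar>\<mu> v * u v\<bar>)" by (rule sum_abs)
      also have "\<dots> \<le> (\<Sum>v\<in>K. \<mu> v * (G + Sf * R\<^sup>2))"
        using K(2) KN nodal by (intro sum_mono) (auto simp: abs_mult intro: mult_left_mono)
      also have "\<dots> = G + Sf * R\<^sup>2" using K(3) by (simp add: sum_distrib_right[symmetric])
      finally show "\<bar>u x\<bar> \<le> R\<^sup>2 * Sf + G" by (simp add: algebra_simps)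
    qed
    then show "supnorm_on (mesh_dom T) u
           \<le> R\<^sup>2 * supnorm_on (mesh_dom T) f + Max ((\<lambda>z. \<bar>gt \<epsilon> z\<bar>) ` bnodes Om T \<epsilon>)"
      unfolding Sf_def G_def .
  qed
qed

end
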